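(* Let $Y$ be a Young diagram with row lengths $a_1\ge\cdots\ge a_m\ge0$ and size $|Y|=\sum_i a_i$. If $\tau^{(2)}(H(Y))=|Y|$, then $Y$ is wide.
   Context: A Young diagram with row lengths $a_1\ge\cdots\ge a_m\ge 0$ represents the partition $|Y|=a_1+\cdots+a_m$. Its conjugate $Y'$ has row lengths $b_j=|\{i:a_i\ge j\}|$. A diagram $X$ dominates a diagram $Z$ of the same size if $\sum_{i=1}^k a_i(X)\ge \sum_{i=1}^k a_i(Z)$ for all $k\ge1$ (padding with zeros). $Y$ is wide if for every subset of its rows, the diagram $Z$ formed by those rows dominates $Z'$. The hypergraph $H(Y)$ has vertex sides $R=\{r_1,\dots,r_m\}$, $C=\{c_1,\dots,c_{a_1}\}$, $S=\{s_1,\dots,s_{a_1}\}$ and edges $\{r_i,c_j,s_k\}$ for all $1\le i\le m$, $1\le j,k\le a_i$. A 2-cover of a hypergraph $H$ is a set $P$ of 2-element vertex sets, each contained in some edge, such that every edge of $H$ contains a member of $P$; $\tau^{(2)}(H)$ is the minimum size of a 2-cover. *)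

theory Defs
  imports Main
begin

text \<open>A Young diagram is given by its list of row lengths a_1 \<ge> ... \<ge> a_m \<ge> 0
  (0-based list indices).\<close>

definition young :: "nat list \<Rightarrow> bool" where
  "young a \<longleftrightarrow> sorted_wrt (\<ge>) a"

definition diag_size :: "nat list \<Rightarrow> nat" where
  "diag_size a = sum_list a"

definition conjugate :: "nat list \<Rightarrow> nat list" where
  "conjugate a = map (\<lambda>j. card {i. i < length a \<and> a ! i \<ge> j}) [1..<Suc (Max (set (0 # a)))]"

definition dominates :: "nat list \<Rightarrow> nat list \<Rightarrow> bool" where
  "dominates x z \<longleftrightarrow> sum_list x = sum_list z \<and> (\<forall>k\<ge>1. sum_list (take k x) \<ge> sum_list (take k z))"

definition wide :: "nat list \<Rightarrow> bool" where
  "wide a \<longleftrightarrow> (\<forall>S \<subseteq> {..<length a}. dominates (nths a S) (conjugate (nths a S)))"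

datatype vert = R nat | C nat | S nat

text \<open>The hypergraph H(Y), as its set of edges {r_i, c_j, s_k}, 1 \<le> j,k \<le> a_i
  (indices shifted to be 0-based).\<close>
definition H :: "nat list \<Rightarrow> vert set set" where
  "H a = {{R i, C j, S k} | i j k. i < length a \<and> j < a ! i \<and> k < a ! i}"

definition two_cover :: "'v set set \<Rightarrow> 'v set set \<Rightarrow> bool" where
  "two_cover E P \<longleftrightarrow>
     (\<forall>p\<in>P. card p = 2 \<and> (\<exists>e\<in>E. p \<subseteq> e)) \<and> (\<forall>e\<in>E. \<exists>p\<in>P. p \<subseteq> e)"

definition tau2 :: "'v set set \<Rightarrow> nat" where
  "tau2 E = (LEAST n. \<exists>P. two_cover E P \<and> finite P \<and> card P = n)"

end

theory Submission
  imports Defs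
begin

lemma sorted_nths_ge: "sorted_wrt (\<ge>) xs \<Longrightarrow> sorted_wrt (\<ge>) (nths xs (I::nat set))"
proof (induction xs arbitrary: I)
  case Nil then show ?case by simp
next
  case (Cons x xs)
  then show ?case
    using set_nths_subset[of xs "{j. Suc j \<in> I}"]
    by (auto simp: nths_Cons sorted_wrt_append)
qed

lemma sum_nths: "sum_list (map f (nths xs I)) = (\<Sum>i\<in>{i. i < length xs \<and> i \<in> I}. f (xs!i))"
proof (induction xs rule: rev_induct)
  case Nil then show ?case by simp
next
  case (snoc x xs)
  define n where "n = length xs"
  have g: "\<And>i. i \<in> {i. i < n \<and> i \<in> I} \<Longrightarrow> f ((xs@[x])!i) = f (xs!i)"
    by (simp add: nth_append n_def)
  show ?case
  proof (cases "n \<in> I")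
    case True
    have eq: "{i. i < length (xs@[x]) \<and> i \<in> I} = insert n {i. i < n \<and> i \<in> I}"
      using True by (auto simp: n_def)
    have xn: "(xs@[x])!n = x" by (simp add: n_def)
    show ?thesis unfolding eq using snoc True g
      by (simp add: nths_append n_def[symmetric] sum.cong[OF refl g] xn add.commute)
  next
    case False
    have eq: "{i. i < length (xs@[x]) \<and> i \<in> I} = {i. i < n \<and> i \<in> I}"
      using False by (auto simp: n_def less_Suc_eq)
    show ?thesis unfolding eq using snoc False g
      by (simp add: nths_append n_def[symmetric] sum.cong[OF refl g])
  qed
qed

lemma sum_take_conj:
  "sum_list (take k (conjugate z)) = sum_list (map (\<lambda>x. min x k) z)"
proof -
  define M where "M = Max (set (0 # z))"
  have zM: "\<And>i. i < length z \<Longrightarrow> z!i \<le> M"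
    unfolding M_def by (simp add: nth_mem)
  have "take k (conjugate z) = map (\<lambda>j. card {i. i < length z \<and> z ! i \<ge> j}) [1..<Suc (min k M)]"
  proof -
    have "take k [1..<Suc M] = [1..<Suc (min k M)]"
    proof (cases "k \<le> M")
      case True then show ?thesis using take_upt[of 1 k "Suc M"] by (simp add: min_def)
    next
      case False then show ?thesis by (simp add: min_def)
    qed
    then show ?thesis unfolding conjugate_def M_def[symmetric] by (simp add: take_map)
  qed
  then have "sum_list (take k (conjugate z)) = (\<Sum>j\<in>{1..min k M}. card {i. i < length z \<and> z ! i \<ge> j})"
    by (simp only: sum_set_upt_conv_sum_list_nat[symmetric] set_upt atLeastLessThanSuc_atLeastAtMost)
  also have "\<dots> = (\<Sum>j\<in>{1..min k M}. \<Sum>i<length z. (if j \<le> z!i then 1 else 0))"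
    by (rule sum.cong) (auto simp: sum.If_cases lessThan_def intro!: arg_cong[where f=card])
  also have "\<dots> = (\<Sum>i<length z. \<Sum>j\<in>{1..min k M}. (if j \<le> z!i then 1 else 0))"
    by (rule sum.swap)
  also have "\<dots> = (\<Sum>i<length z. min (z!i) k)"
  proof (rule sum.cong)
    fix i assume "i \<in> {..<length z}"
    then have "z!i \<le> M" using zM by auto
    have "(\<Sum>j\<in>{1..min k M}. (if j \<le> z!i then 1 else 0::nat)) = card {j\<in>{1..min k M}. j \<le> z!i}"
      by (simp add: sum.If_cases) (auto intro!: arg_cong[where f=card])
    also have "{j\<in>{1..min k M}. j \<le> z!i} = {1..min (z!i) k}"
      using \<open>z!i \<le> M\<close> by auto
    finally show "(\<Sum>j\<in>{1..min k M}. (if j \<le> z!i then 1 else 0::nat)) = min (z!i) k" by simp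
  qed simp
  also have "\<dots> = sum_list (map (\<lambda>x. min x k) z)"
    by (simp add: sum_list_sum_nth atLeast0LessThan)
  finally show ?thesis .
qed

lemma sum_conj: "sum_list (conjugate z) = sum_list z"
proof -
  define K where "K = length (conjugate z)"
  have "sum_list (conjugate z) = sum_list (map (\<lambda>x. min x K) z)"
    using sum_take_conj[of K z] by (simp add: K_def)
  also have "map (\<lambda>x. min x K) z = z"
  proof (rule map_idI)
    fix x assume "x \<in> set z"
    then have "x \<le> Max (set (0 # z))" by simp
    then show "min x K = x" by (simp add: K_def conjugate_def)
  qed
  finally show ?thesis .
qed

lemma key_ineq:
  assumes "sorted_wrt (\<ge>) z" "k < length z" "k \<ge> 1"
  shows "k * (z!(k-1)) + sum_list (map (\<lambda>x. x - z!(k-1)) z) \<le> sum_list (take k z)"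
proof -
  define m where "m = z!(k-1)"
  have tk: "\<forall>x\<in>set (take k z). m \<le> x"
  proof
    fix x assume "x \<in> set (take k z)"
    then obtain i where "i < k" "x = z!i" using assms(2) by (auto simp: in_set_conv_nth)
    then show "m \<le> x" unfolding m_def using assms
      by (cases "i = k - 1") (auto simp: sorted_wrt_iff_nth_less)
  qed
  have dk: "\<forall>x\<in>set (drop k z). x \<le> m"
  proof
    fix x assume "x \<in> set (drop k z)"
    then obtain i where "i < length z - k" "x = z!(k+i)" by (auto simp: in_set_conv_nth)
    then show "x \<le> m" unfolding m_def using assms
      by (auto simp: sorted_wrt_iff_nth_less)
  qed
  have d0: "sum_list (map (\<lambda>x. x - m) (drop k z)) = 0"
    using dk by (simp add: sum_list_eq_0_iff)
  have "sum_list (take k z) = sum_list (map (\<lambda>x. m + (x - m)) (take k z))"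
    using tk by (metis (no_types, lifting) le_add_diff_inverse map_idI)
  also have "\<dots> = k * m + sum_list (map (\<lambda>x. x - m) (take k z))"
    using assms(2) by (simp add: sum_list_addf sum_list_triv)
  finally have "sum_list (take k z) = k * m + sum_list (map (\<lambda>x. x - m) (take k z))" .
  moreover have "sum_list (map (\<lambda>x. x - m) z) = sum_list (map (\<lambda>x. x - m) (take k z)) + sum_list (map (\<lambda>x. x - m) (drop k z))"
    by (metis append_take_drop_id map_append sum_list_append)
  ultimately show ?thesis using d0 by (simp add: m_def)
qed

lemma cover_lemma:
  assumes Q: "Q \<subseteq> {..<length a}"
    and ineq: "k*m + (\<Sum>i\<in>Q. a!i - m) < (\<Sum>i\<in>Q. min (a!i) k)"
  shows "tau2 (H a) < diag_size a"
proof -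
  define P0 where "P0 = (\<lambda>(j,l). {C j, S l}) ` ({..<k} \<times> {..<m})"
  define P1 where "P1 = (\<lambda>(i,j). {R i, C j}) ` (SIGMA i:Q. {k..<a!i})"
  define P2 where "P2 = (\<lambda>(i,l). {R i, S l}) ` (SIGMA i:Q. {m..<a!i})"
  define P3 where "P3 = (\<lambda>(i,j). {R i, C j}) ` (SIGMA i:({..<length a} - Q). {..<a!i})"
  define P where "P = {p \<in> P0 \<union> P1 \<union> P2 \<union> P3. \<exists>e\<in>H a. p \<subseteq> e}"
  have finQ: "finite Q" using Q finite_subset by blast
  have f0: "finite P0" unfolding P0_def by simp
  have f1: "finite P1" unfolding P1_def using finQ by simp
  have f2: "finite P2" unfolding P2_def using finQ by simp
  have f3: "finite P3" unfolding P3_def by simp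
  have finP: "finite P" unfolding P_def using f0 f1 f2 f3 by simp
  have card2: "\<forall>p\<in>P0 \<union> P1 \<union> P2 \<union> P3. card p = 2"
    unfolding P0_def P1_def P2_def P3_def by (auto simp: card_insert_if)
  have cov: "two_cover (H a) P"
    unfolding two_cover_def
  proof (intro conjI ballI)
    fix p assume "p \<in> P"
    then show "card p = 2" using card2 unfolding P_def by auto
    show "\<exists>e\<in>H a. p \<subseteq> e" using \<open>p \<in> P\<close> unfolding P_def by auto
  next
    fix e assume "e \<in> H a"
    then obtain i j l where e: "e = {R i, C j, S l}" "i < length a" "j < a!i" "l < a!i"
      unfolding H_def by auto
    have "\<exists>p \<in> P0 \<union> P1 \<union> P2 \<union> P3. p \<subseteq> e"
    proof (cases "i \<in> Q")
      case False
      then have "{R i, C j} \<in> P3" unfolding P3_def using e by force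
      then show ?thesis using e(1) by (intro bexI[where x="{R i, C j}"]) auto
    next
      case True
      show ?thesis
      proof (cases "k \<le> j")
        case True
        then have "{R i, C j} \<in> P1" unfolding P1_def using e \<open>i \<in> Q\<close> by force
        then show ?thesis using e(1) by (intro bexI[where x="{R i, C j}"]) auto
      next
        case jk: False
        show ?thesis
        proof (cases "m \<le> l")
          case True
          then have "{R i, S l} \<in> P2" unfolding P2_def using e \<open>i \<in> Q\<close> by force
          then show ?thesis using e(1) by (intro bexI[where x="{R i, S l}"]) auto
        next
          case False
          then have "{C j, S l} \<in> P0" unfolding P0_def using jk by force
          then show ?thesis using e(1) by (intro bexI[where x="{C j, S l}"]) auto
        qed
      qed
    qed
    then show "\<exists>p\<in>P. p \<subseteq> e" unfolding P_def using \<open>e \<in> H a\<close> by blast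
  qed
  have c0: "card P0 \<le> k*m" unfolding P0_def
    using card_image_le[of "{..<k} \<times> {..<m}"] by (simp add: card_cartesian_product)
  have c1: "card P1 \<le> (\<Sum>i\<in>Q. a!i - k)" unfolding P1_def
    using card_image_le[of "SIGMA i:Q. {k..<a!i}"] finQ by (simp add: card_SigmaI)
  have c2: "card P2 \<le> (\<Sum>i\<in>Q. a!i - m)" unfolding P2_def
    using card_image_le[of "SIGMA i:Q. {m..<a!i}"] finQ by (simp add: card_SigmaI)
  have c3: "card P3 \<le> (\<Sum>i\<in>{..<length a} - Q. a!i)" unfolding P3_def
    using card_image_le[of "SIGMA i:({..<length a} - Q). {..<a!i}"] by (simp add: card_SigmaI)
  have "card P \<le> card (P0 \<union> P1 \<union> P2 \<union> P3)"
    unfolding P_def using f0 f1 f2 f3 by (intro card_mono) auto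
  also have "\<dots> \<le> card P0 + card P1 + card P2 + card P3"
    by (meson add_le_mono card_Un_le le_trans order_refl)
  finally have cP: "card P \<le> k*m + (\<Sum>i\<in>Q. a!i - k) + (\<Sum>i\<in>Q. a!i - m) + (\<Sum>i\<in>{..<length a} - Q. a!i)"
    using c0 c1 c2 c3 by linarith
  have ds: "diag_size a = (\<Sum>i\<in>Q. a!i) + (\<Sum>i\<in>{..<length a} - Q. a!i)"
    unfolding diag_size_def sum_list_sum_nth atLeast0LessThan
    using sum.subset_diff[OF Q, of "(!) a"] by (simp add: add.commute)
  have "(\<Sum>i\<in>Q. a!i) = (\<Sum>i\<in>Q. (a!i - k) + min (a!i) k)"
    by (rule sum.cong) auto
  also have "\<dots> = (\<Sum>i\<in>Q. a!i - k) + (\<Sum>i\<in>Q. min (a!i) k)"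
    by (simp add: sum.distrib)
  finally have "card P < diag_size a" using cP ds ineq by linarith
  moreover have "tau2 (H a) \<le> card P"
    unfolding tau2_def using cov finP by (intro Least_le) blast
  ultimately show ?thesis by linarith
qed

theorem theorem3:
  fixes a :: "nat list"
  assumes "young a"
    and "tau2 (H a) = diag_size a"
  shows "wide a"
proof (rule ccontr)
  assume "\<not> wide a"
  then obtain Q where Q: "Q \<subseteq> {..<length a}" and nd: "\<not> dominates (nths a Q) (conjugate (nths a Q))"
    unfolding wide_def by blast
  define z where "z = nths a Q"
  have sz: "sorted_wrt (\<ge>) z" unfolding z_def using assms(1) sorted_nths_ge young_def by blast
  obtain k where k1: "k \<ge> 1" and lt: "sum_list (take k z) < sum_list (map (\<lambda>x. min x k) z)"
  proof -
    have "sum_list z = sum_list (conjugate z)" using sum_conj[of z] by simp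
    then obtain k where "k \<ge> 1" "\<not> sum_list (take k z) \<ge> sum_list (take k (conjugate z))"
      using nd unfolding dominates_def z_def[symmetric] by blast
    then show ?thesis using that sum_take_conj[of k z] by simp
  qed
  have kl: "k < length z"
  proof (rule ccontr)
    assume "\<not> k < length z"
    then have "take k z = z" by simp
    moreover have "sum_list (map (\<lambda>x. min x k) z) \<le> sum_list (map (\<lambda>x. x) z)"
      by (rule sum_list_mono) simp
    ultimately show False using lt by simp
  qed
  define m where "m = z!(k-1)"
  have "k*m + sum_list (map (\<lambda>x. x - m) z) < sum_list (map (\<lambda>x. min x k) z)"
    using key_ineq[OF sz kl k1] lt unfolding m_def by linarith
  moreover have QQ: "{i. i < length a \<and> i \<in> Q} = Q" using Q by auto
  moreover have zs: "\<And>f. sum_list (map f z) = (\<Sum>i\<in>Q. f (a!i))"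
    unfolding z_def sum_nths QQ by (rule refl)
  ultimately have "k*m + (\<Sum>i\<in>Q. a!i - m) < (\<Sum>i\<in>Q. min (a!i) k)"
    by (simp only: zs)
  then have "tau2 (H a) < diag_size a" by (rule cover_lemma[OF Q])
  then show False using assms(2) by simp
qed

end
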